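(* Let $p_0:(0,2/5]\times(0,\infty)\to(0,\infty)$ be any function. Call a tuple $(\psi,\theta,\epsilon,C,t,K,f,g,V,W,\mathcal E)$ a counterexample if: $\epsilon\in(0,2/5]$, $C>0$; $\psi,\theta:\mathbb N\to\mathbb R_{\ge0}$ are finitely supported; $f,g:\mathbb N\to\mathbb R_{\ge0}$ are multiplicative with $(1\star f)(n)\le n$ and $(1\star g)(n)\le n$ for all $n\ge1$; $V,W\subseteq\mathbb N$, $t\ge1$, $K\in\mathbb R$; $\mathcal E\subseteq \mathcal E_{\psi,\theta}^{t,K}\cap(V\times W)$; and $$\mu_{\psi,\theta}^{f,g}(\mathcal E) > (100e^{C})^{P_{\psi,\theta}(\epsilon, C)}(\operatorname{Log} t)^{\frac{1}{2}(e^{40C}-1)}\big(\mu_{\psi}^{f}(V)\mu_{\theta}^{g}(W)e^{-CK}\big)^{\frac{1}{2}+\epsilon}.$$ Let $(\psi,\theta,\epsilon,C,t,K,f,g,V,W,\mathcal E)$ be a counterexample with $\lvert\mathcal P_{\psi,\theta}\rvert$ minimal among all counterexamples, and let $p\in\mathcal P_{\psi,\theta}$. For integers $i,j\ge0$ let $V_i=\{v\in V:\nu_p(v)=i\}$, $W_j=\{w\in W:\nu_p(w)=j\}$, $m(i,j)=\frac{\mu_{\psi,\theta}^{f,g}(\mathcal E\cap(V_i\times W_j))}{\mu_{\psi,\theta}^{f,g}(\mathcal E)}$, $\alpha_i=\mu_\psi^f(V_i)/\mu_\psi^f(V)$, $\beta_j=\mu_\theta^g(W_j)/\mu_\theta^g(W)$,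 and $q=\frac{2}{1-2\epsilon}$, $q'=\frac{2}{1+2\epsilon}$. Then for all $i,j\ge0$, $$m(i,j)\leq (100e^{C})^{-\mathbf 1_{p\leq p_0(\epsilon, C)}}\,p^{-\frac{\lvert i-j\rvert}{q}}\big(\alpha_i \beta_j e^{\mathbf 1_{i\neq j}\cdot C}\big)^{\frac{1}{q'}}.$$
   Context: For $v,w\in\mathbb N$, $t\geq1$: $\omega_t(v,w) = \lvert\{ p \text{ prime}\le t : p\mid \frac{vw}{\gcd(v,w)^2}\}\rvert$; $D_{\psi,\theta}(v,w) = \frac{\max(w\psi(v),v\theta(w))}{\gcd(v,w)}$. $\mu_\psi^f(v)=\frac{f(v)\psi(v)}{v}$, $\mu_\psi^f(V)=\sum_{v\in V}\mu_\psi^f(v)$, $\mu_{\psi,\theta}^{f,g}(\mathcal E)=\sum_{(v,w)\in\mathcal E}\mu_\psi^f(v)\mu_\theta^g(w)$. $V_\psi=\operatorname{supp}\psi$, $W_\theta=\operatorname{supp}\theta$, $\mathcal E_{\psi,\theta}^{t,K}=\{(v,w)\in V_\psi\times W_\theta : D_{\psi,\theta}(v,w)\le 1,\ \omega_t(v,w)\ge K\}$. $\mathcal P_{\psi,\theta}=\{p \text{ prime}: \exists (v,w)\in V_\psi\times W_\theta,\ p\mid vw\}$ and $P_{\psi,\theta}(\epsilon,C)=p_0(\epsilon,C)+\lvert\mathcal P_{\psi,\theta}\cap[1,p_0(\epsilon,C)]\rvert$. $(1\star f)(n)=\sum_{d\mid n}f(d)$. $\operatorname{Log} t=\max\{1,\log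 t\}$. $\nu_p$ is the $p$-adic valuation; $\mathbf 1_S$ is $1$ if the condition $S$ holds and $0$ otherwise. *)

theory Defs
  imports Complex_Main "HOL-Computational_Algebra.Primes"
begin

text \<open>Natural numbers of the paper are the positive integers; functions on them are
  modelled as functions on nat that vanish at 0 (support convention).\<close>

definition suppf :: "(nat \<Rightarrow> real) \<Rightarrow> nat set" where
  "suppf \<psi> = {v. \<psi> v \<noteq> 0}"

definition omega_t :: "real \<Rightarrow> nat \<Rightarrow> nat \<Rightarrow> nat" where
  "omega_t t v w = card {p. prime p \<and> real p \<le> t \<and> p dvd ((v * w) div (gcd v w)^2)}"

definition Dpt :: "(nat \<Rightarrow> real) \<Rightarrow> (nat \<Rightarrow> real) \<Rightarrow> nat \<Rightarrow> nat \<Rightarrow> real" where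
  "Dpt \<psi> \<theta> v w = max (real w * \<psi> v) (real v * \<theta> w) / real (gcd v w)"

definition mu1 :: "(nat \<Rightarrow> real) \<Rightarrow> (nat \<Rightarrow> real) \<Rightarrow> nat \<Rightarrow> real" where
  "mu1 f \<psi> v = f v * \<psi> v / real v"

text \<open>Sum over V; terms outside the (finite) support of psi vanish, so we sum over V \<inter> supp psi.\<close>
definition muS :: "(nat \<Rightarrow> real) \<Rightarrow> (nat \<Rightarrow> real) \<Rightarrow> nat set \<Rightarrow> real" where
  "muS f \<psi> V = (\<Sum>v \<in> V \<inter> suppf \<psi>. mu1 f \<psi> v)"

definition muE :: "(nat \<Rightarrow> real) \<Rightarrow> (nat \<Rightarrow> real) \<Rightarrow> (nat \<Rightarrow> real) \<Rightarrow> (nat \<Rightarrow> real)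
    \<Rightarrow> (nat \<times> nat) set \<Rightarrow> real" where
  "muE f g \<psi> \<theta> E = (\<Sum>x \<in> E \<inter> (suppf \<psi> \<times> suppf \<theta>). mu1 f \<psi> (fst x) * mu1 g \<theta> (snd x))"

definition Eset :: "(nat \<Rightarrow> real) \<Rightarrow> (nat \<Rightarrow> real) \<Rightarrow> real \<Rightarrow> real \<Rightarrow> (nat \<times> nat) set" where
  "Eset \<psi> \<theta> t K = {(v, w). v \<in> suppf \<psi> \<and> w \<in> suppf \<theta> \<and> Dpt \<psi> \<theta> v w \<le> 1
                           \<and> real (omega_t t v w) \<ge> K}"

definition Pset :: "(nat \<Rightarrow> real) \<Rightarrow> (nat \<Rightarrow> real) \<Rightarrow> nat set" where
  "Pset \<psi> \<theta> = {p. prime p \<and> (\<exists>v \<in> suppf \<psi>. \<exists>w \<in> suppf \<theta>. p dvd v * w)}"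

definition Pbig :: "(real \<Rightarrow> real \<Rightarrow> real) \<Rightarrow> (nat \<Rightarrow> real) \<Rightarrow> (nat \<Rightarrow> real) \<Rightarrow> real \<Rightarrow> real \<Rightarrow> real" where
  "Pbig p0 \<psi> \<theta> \<epsilon> C = p0 \<epsilon> C + real (card (Pset \<psi> \<theta> \<inter> {p. 1 \<le> real p \<and> real p \<le> p0 \<epsilon> C}))"

definition LogT :: "real \<Rightarrow> real" where
  "LogT t = max 1 (ln t)"

definition multiplicative :: "(nat \<Rightarrow> real) \<Rightarrow> bool" where
  "multiplicative f \<longleftrightarrow> f 1 = 1 \<and> (\<forall>m n. coprime m n \<longrightarrow> f (m * n) = f m * f n)"

definition counterexample ::
  "(real \<Rightarrow> real \<Rightarrow> real) \<Rightarrow> (nat \<Rightarrow> real) \<Rightarrow> (nat \<Rightarrow> real) \<Rightarrow> real \<Rightarrow> real \<Rightarrow> real \<Rightarrow> real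
    \<Rightarrow> (nat \<Rightarrow> real) \<Rightarrow> (nat \<Rightarrow> real) \<Rightarrow> nat set \<Rightarrow> nat set \<Rightarrow> (nat \<times> nat) set \<Rightarrow> bool" where
  "counterexample p0 \<psi> \<theta> \<epsilon> C t K f g V W E \<longleftrightarrow>
     0 < \<epsilon> \<and> \<epsilon> \<le> 2/5 \<and> 0 < C \<and>
     (\<forall>n. 0 \<le> \<psi> n) \<and> (\<forall>n. 0 \<le> \<theta> n) \<and> \<psi> 0 = 0 \<and> \<theta> 0 = 0 \<and>
     finite (suppf \<psi>) \<and> finite (suppf \<theta>) \<and>
     (\<forall>n. 0 \<le> f n) \<and> (\<forall>n. 0 \<le> g n) \<and> multiplicative f \<and> multiplicative g \<and>
     (\<forall>n\<ge>1. (\<Sum>d | d dvd n. f d) \<le> real n) \<and> (\<forall>n\<ge>1. (\<Sum>d | d dvd n. g d) \<le> real n) \<and>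
     V \<subseteq> {1..} \<and> W \<subseteq> {1..} \<and> 1 \<le> t \<and>
     E \<subseteq> Eset \<psi> \<theta> t K \<inter> (V \<times> W) \<and>
     muE f g \<psi> \<theta> E >
       (100 * exp C) powr (Pbig p0 \<psi> \<theta> \<epsilon> C) * (LogT t) powr ((1/2) * (exp (40 * C) - 1))
       * (muS f \<psi> V * muS g \<theta> W * exp (- C * K)) powr (1/2 + \<epsilon>)"

end

theory Submission
  imports Defs
begin

lemma gcd_pp:
  fixes p v w :: nat
  assumes "prime p" "\<not> p dvd v" "\<not> p dvd w"
  shows "gcd (p^i * v) (p^j * w) = p^(min i j) * gcd v w"
proof -
  have cop: "\<And>k x. \<not> p dvd x \<Longrightarrow> coprime (p^k) x"
    using assms(1) prime_imp_coprime by (auto simp: coprime_power_left_iff)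
  show ?thesis
  proof (cases "i \<le> j")
    case True
    have eq: "p^j * w = p^i * (p^(j-i) * w)" using True by (simp add: power_add[symmetric])
    have "gcd (p^i * v) (p^j * w) = p^i * gcd v (p^(j-i) * w)"
      unfolding eq by (metis gcd_mult_distrib_nat)
    also have "gcd v (p^(j-i) * w) = gcd v w"
      using cop[OF assms(2), of "j-i"] by (metis coprime_commute gcd.commute gcd_mult_left_left_cancel)
    finally show ?thesis using True by simp
  next
    case False
    have eq: "p^i * v = p^j * (p^(i-j) * v)" using False by (simp add: power_add[symmetric])
    have "gcd (p^i * v) (p^j * w) = p^j * gcd (p^(i-j) * v) w"
      unfolding eq by (metis gcd_mult_distrib_nat)
    also have "gcd (p^(i-j) * v) w = gcd v w"
      using cop[OF assms(3), of "i-j"] by (metis coprime_commute gcd_mult_left_left_cancel)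
    finally show ?thesis using False by simp
  qed
qed

lemma quot_pp:
  fixes p v w :: nat
  assumes "prime p" "\<not> p dvd v" "\<not> p dvd w"
  shows "(p^i * v * (p^j * w)) div (gcd (p^i * v) (p^j * w))^2
         = p^(i + j - 2 * min i j) * (v * w div (gcd v w)^2)"
proof -
  obtain a where a: "v = gcd v w * a" by (meson gcd_dvd1 dvdE)
  obtain b where b: "w = gcd v w * b" by (meson gcd_dvd2 dvdE)
  have gpos: "gcd v w > 0" using assms by (metis gcd_pos_nat dvd_0_right)
  have pp: "p > 0" using assms(1) prime_gt_0_nat by blast
  have e1: "v * w div (gcd v w)^2 = a * b"
  proof -
    have "v * w = (gcd v w)^2 * (a * b)" using a b by (metis mult.assoc mult.left_commute power2_eq_square)
    then show ?thesis using gpos by simp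
  qed
  have e2: "p^i * v * (p^j * w) = (p^(min i j) * gcd v w)^2 * (p^(i + j - 2 * min i j) * (a * b))"
  proof -
    have "p^i * p^j = (p^(min i j))^2 * p^(i + j - 2 * min i j)"
      by (simp add: power_add[symmetric] power_mult[symmetric])
    then show ?thesis
      using a b by (metis (no_types, lifting) mult.assoc mult.left_commute power2_eq_square power_mult_distrib)
  qed
  have "(p^(min i j) * gcd v w)^2 > 0" using gpos pp by simp
  then show ?thesis using e1 e2 gcd_pp[OF assms, of i j] by simp
qed

lemma omega_pp:
  fixes p v w :: nat
  assumes "prime p" "\<not> p dvd v" "\<not> p dvd w"
  shows "real (omega_t t (p^i*v) (p^j*w)) \<le> real (omega_t t v w) + (if i \<noteq> j then 1 else 0)"
proof -
  define N' where "N' = v * w div (gcd v w)^2"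
  define d where "d = i + j - 2 * min i j"
  have N: "(p^i * v * (p^j * w)) div (gcd (p^i * v) (p^j * w))^2 = p^d * N'"
    using quot_pp[OF assms] by (simp add: N'_def d_def)
  define S' where "S' = {q. prime q \<and> real q \<le> t \<and> q dvd N'}"
  have finS': "finite S'"
    by (rule finite_subset[of _ "{..nat \<lceil>t\<rceil>}"]) (auto simp: S'_def, linarith)
  have sub: "{q. prime q \<and> real q \<le> t \<and> q dvd p^d * N'} \<subseteq> S' \<union> (if i \<noteq> j then {p} else {})"
  proof
    fix q assume q: "q \<in> {q. prime q \<and> real q \<le> t \<and> q dvd p^d * N'}"
    show "q \<in> S' \<union> (if i \<noteq> j then {p} else {})"
    proof (cases "i = j")
      case True
      then have "d = 0" by (simp add: d_def)
      then show ?thesis using q by (simp add: S'_def)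
    next
      case False
      show ?thesis
      proof (cases "q = p")
        case True then show ?thesis using False by simp
      next
        case qp: False
        have "\<not> q dvd p^d"
        proof
          assume "q dvd p^d"
          then have "q dvd p" using q prime_dvd_power by blast
          then show False using q qp assms(1) by (simp add: primes_dvd_imp_eq)
        qed
        moreover have "q dvd p^d * N'" "prime q" using q by auto
        ultimately have "q dvd N'" using prime_dvd_mult_iff[of q "p^d" N'] by simp
        then show ?thesis using q by (simp add: S'_def)
      qed
    qed
  qed
  have "omega_t t (p^i*v) (p^j*w) \<le> card (S' \<union> (if i \<noteq> j then {p} else {}))"
    unfolding omega_t_def N using sub finS' by (intro card_mono) auto
  also have "\<dots> \<le> card S' + card (if i \<noteq> j then {p} else {})" by (rule card_Un_le)
  also have "card S' = omega_t t v w" by (simp add: S'_def omega_t_def N'_def)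
  finally show ?thesis by (cases "i = j") auto
qed

lemma Dpt_pp:
  fixes p v w :: nat
  assumes "prime p" "\<not> p dvd v" "\<not> p dvd w"
  shows "Dpt (\<lambda>v. if p dvd v then 0 else real p^(j - min i j) * \<psi> (p^i*v))
             (\<lambda>w. if p dvd w then 0 else real p^(i - min i j) * \<theta> (p^j*w)) v w
         = Dpt \<psi> \<theta> (p^i*v) (p^j*w)"
proof -
  define m where "m = min i j"
  have pp: "real p > 0" using assms(1) prime_gt_0_nat by simp
  have e1: "real (p^j*w) * \<psi> (p^i*v) = real p^m * (real w * (real p^(j-m) * \<psi> (p^i*v)))"
    by (simp add: m_def power_add[symmetric])
  have e2: "real (p^i*v) * \<theta> (p^j*w) = real p^m * (real v * (real p^(i-m) * \<theta> (p^j*w)))"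
    by (simp add: m_def power_add[symmetric])
  have g: "real (gcd (p^i*v) (p^j*w)) = real p^m * real (gcd v w)"
    using gcd_pp[OF assms] by (simp add: m_def)
  have "max (real p^m * a) (real p^m * b) = real p^m * max a b" for a b
    using pp by (simp add: max_def)
  then show ?thesis using assms pp
    unfolding Dpt_def e1 e2 g by (simp add: m_def[symmetric])
qed

lemma mult_coprime_pp:
  fixes p v :: nat
  assumes "prime p" "\<not> p dvd v" "multiplicative f"
  shows "f (p^k * v) = f (p^k) * f v"
proof -
  have "coprime (p^k) v"
    using assms(1,2) prime_imp_coprime by (auto simp: coprime_power_left_iff)
  then show ?thesis using assms(3) unfolding multiplicative_def by blast
qed

lemma mu1_pp:
  fixes p v :: nat
  assumes "prime p" "\<not> p dvd v" "multiplicative f"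
  shows "mu1 f \<psi> (p^k * v) = f (p^k) / (real p^k * real p^e) *
           mu1 f (\<lambda>v. if p dvd v then 0 else real p^e * \<psi> (p^k*v)) v"
proof -
  have pp: "real p > 0" using assms(1) prime_gt_0_nat by simp
  show ?thesis using assms(2) pp unfolding mu1_def mult_coprime_pp[OF assms(1,2,3)]
    by (simp add: field_simps)
qed

lemma set_pp:
  fixes p :: nat
  assumes "prime p" "\<psi> 0 = 0" "V \<subseteq> {1..}"
  shows "{v\<in>V. multiplicity p v = k} \<inter> suppf \<psi> =
     (\<lambda>v. p^k*v) ` ({v. p^k*v \<in> V \<and> \<not> p dvd v} \<inter> suppf (\<lambda>v. if p dvd v then 0 else real p^e * \<psi> (p^k*v)))"
proof (intro equalityI subsetI)
  have pp: "p > 0" using assms(1) prime_gt_0_nat by simp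
  fix x assume x: "x \<in> {v\<in>V. multiplicity p v = k} \<inter> suppf \<psi>"
  obtain y where y: "x = p ^ multiplicity p x * y" "\<not>p dvd y"
  proof -
    have x0: "x \<noteq> 0" using x assms(3) by auto
    have nu: "\<not> is_unit p" using assms(1) prime_gt_1_nat by auto
    show ?thesis using multiplicity_decompose'[of x p] x0 nu that by blast
  qed
  have mk: "multiplicity p x = k" using x by simp
  have xk: "x = p^k * y" using y(1) unfolding mk .
  have "p^k*y \<in> V" "\<psi> (p^k*y) \<noteq> 0" using x xk by (auto simp: suppf_def)
  show "x \<in> (\<lambda>v. p^k*v) ` ({v. p^k*v \<in> V \<and> \<not> p dvd v} \<inter> suppf (\<lambda>v. if p dvd v then 0 else real p^e * \<psi> (p^k*v)))"
  proof (rule image_eqI[where x=y])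
    show "x = p^k*y" by (rule xk)
    show "y \<in> {v. p^k*v \<in> V \<and> \<not> p dvd v} \<inter> suppf (\<lambda>v. if p dvd v then 0 else real p^e * \<psi> (p^k*v))"
      using \<open>p^k*y \<in> V\<close> \<open>\<psi> (p^k*y) \<noteq> 0\<close> y(2) pp unfolding suppf_def by simp
  qed
next
  have pp: "p > 0" using assms(1) prime_gt_0_nat by simp
  fix x assume "x \<in> (\<lambda>v. p^k*v) ` ({v. p^k*v \<in> V \<and> \<not> p dvd v} \<inter> suppf (\<lambda>v. if p dvd v then 0 else real p^e * \<psi> (p^k*v)))"
  then obtain y where y: "x = p^k*y" "p^k*y \<in> V" "\<not> p dvd y" "\<psi> (p^k*y) \<noteq> 0"
    by (auto simp: suppf_def split: if_splits)
  have "multiplicity p x = k" using y(1,3) pp by (intro multiplicity_decomposeI[of x p k y]) auto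
  then show "x \<in> {v\<in>V. multiplicity p v = k} \<inter> suppf \<psi>" using y by (auto simp: suppf_def)
qed

lemma muS_pp:
  fixes p :: nat
  assumes "prime p" "\<psi> 0 = 0" "V \<subseteq> {1..}" "multiplicative f"
  shows "muS f \<psi> {v\<in>V. multiplicity p v = k} = f (p^k) / (real p^k * real p^e) *
     muS f (\<lambda>v. if p dvd v then 0 else real p^e * \<psi> (p^k*v)) {v. p^k*v \<in> V \<and> \<not> p dvd v}"
proof -
  define \<psi>' where "\<psi>' = (\<lambda>v. if p dvd v then 0 else real p^e * \<psi> (p^k*v))"
  define A where "A = {v. p^k*v \<in> V \<and> \<not> p dvd v} \<inter> suppf \<psi>'"
  define c where "c = f (p^k) / (real p^k * real p^e)"
  have pp: "p > 0" using assms(1) prime_gt_0_nat by simp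
  have inj: "inj_on (\<lambda>v. p^k*v) A" using pp by (auto simp: inj_on_def)
  have "muS f \<psi> {v\<in>V. multiplicity p v = k} = sum (mu1 f \<psi>) ((\<lambda>v. p^k*v) ` A)"
    unfolding muS_def A_def \<psi>'_def by (rule arg_cong[where f="sum _"], rule set_pp[where p=p and \<psi>=\<psi> and V=V and k=k and e=e, OF assms(1,2,3)])
  also have "\<dots> = sum (\<lambda>v. mu1 f \<psi> (p^k*v)) A"
    using sum.reindex[OF inj, of "mu1 f \<psi>"] by (simp add: comp_def)
  also have "\<dots> = sum (\<lambda>v. c * mu1 f \<psi>' v) A"
  proof (rule sum.cong[OF refl])
    fix x assume "x \<in> A"
    then have "\<not> p dvd x" by (simp add: A_def)
    then show "mu1 f \<psi> (p^k*x) = c * mu1 f \<psi>' x"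
      unfolding c_def \<psi>'_def by (rule mu1_pp[OF assms(1) _ assms(4)])
  qed
  also have "\<dots> = c * muS f \<psi>' {v. p^k*v \<in> V \<and> \<not> p dvd v}"
    by (simp add: muS_def A_def sum_distrib_left)
  finally show ?thesis unfolding c_def \<psi>'_def .
qed

lemma setE_pp:
  fixes p i j ea eb :: nat
  assumes "prime p" "\<psi> 0 = 0" "\<theta> 0 = 0" "V \<subseteq> {1..}" "W \<subseteq> {1..}" "E \<subseteq> V \<times> W"
  defines "\<psi>' \<equiv> (\<lambda>v. if p dvd v then 0 else real p^ea * \<psi> (p^i*v))"
      and "\<theta>' \<equiv> (\<lambda>w. if p dvd w then 0 else real p^eb * \<theta> (p^j*w))"
  shows "E \<inter> ({v\<in>V. multiplicity p v = i} \<times> {w\<in>W. multiplicity p w = j}) \<inter> (suppf \<psi> \<times> suppf \<theta>)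
    = (\<lambda>(v,w). (p^i*v, p^j*w)) ` ({(v,w). (p^i*v, p^j*w) \<in> E \<and> \<not> p dvd v \<and> \<not> p dvd w} \<inter> (suppf \<psi>' \<times> suppf \<theta>'))"
proof -
  have S1: "{v\<in>V. multiplicity p v = i} \<inter> suppf \<psi> = (\<lambda>v. p^i*v) ` ({v. p^i*v \<in> V \<and> \<not> p dvd v} \<inter> suppf \<psi>')"
    unfolding \<psi>'_def by (rule set_pp[where p=p and \<psi>=\<psi> and V=V and k=i and e=ea, OF assms(1,2,4)])
  have S2: "{w\<in>W. multiplicity p w = j} \<inter> suppf \<theta> = (\<lambda>w. p^j*w) ` ({w. p^j*w \<in> W \<and> \<not> p dvd w} \<inter> suppf \<theta>')"
    unfolding \<theta>'_def by (rule set_pp[where p=p and \<psi>=\<theta> and V=W and k=j and e=eb, OF assms(1,3,5)])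
  have L: "E \<inter> ({v\<in>V. multiplicity p v = i} \<times> {w\<in>W. multiplicity p w = j}) \<inter> (suppf \<psi> \<times> suppf \<theta>)
      = E \<inter> (({v\<in>V. multiplicity p v = i} \<inter> suppf \<psi>) \<times> ({w\<in>W. multiplicity p w = j} \<inter> suppf \<theta>))" by blast
  show ?thesis unfolding L S1 S2
  proof (intro equalityI subsetI)
    fix x assume x: "x \<in> E \<inter> ((\<lambda>v. p^i*v) ` ({v. p^i*v \<in> V \<and> \<not> p dvd v} \<inter> suppf \<psi>') \<times>
                   (\<lambda>w. p^j*w) ` ({w. p^j*w \<in> W \<and> \<not> p dvd w} \<inter> suppf \<theta>'))"
    then obtain y z where yz: "x = (p^i*y, p^j*z)" "y \<in> {v. p^i*v \<in> V \<and> \<not> p dvd v} \<inter> suppf \<psi>'"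
       "z \<in> {w. p^j*w \<in> W \<and> \<not> p dvd w} \<inter> suppf \<theta>'" by blast
    show "x \<in> (\<lambda>(v,w). (p^i*v, p^j*w)) ` ({(v,w). (p^i*v, p^j*w) \<in> E \<and> \<not> p dvd v \<and> \<not> p dvd w} \<inter> (suppf \<psi>' \<times> suppf \<theta>'))"
      by (rule image_eqI[where x="(y,z)"]) (use x yz in auto)
  next
    fix x assume "x \<in> (\<lambda>(v,w). (p^i*v, p^j*w)) ` ({(v,w). (p^i*v, p^j*w) \<in> E \<and> \<not> p dvd v \<and> \<not> p dvd w} \<inter> (suppf \<psi>' \<times> suppf \<theta>'))"
    then obtain y z where yz0: "x = (p^i*y, p^j*z)" "(y,z) \<in> {(v,w). (p^i*v, p^j*w) \<in> E \<and> \<not> p dvd v \<and> \<not> p dvd w} \<inter> (suppf \<psi>' \<times> suppf \<theta>')"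
      by auto
    then have yz: "x = (p^i*y, p^j*z)" "(p^i*y, p^j*z) \<in> E" "\<not> p dvd y" "\<not> p dvd z"
      "y \<in> suppf \<psi>'" "z \<in> suppf \<theta>'" by auto
    have "p^i*y \<in> V" "p^j*z \<in> W" using yz(2) assms(6) by auto
    then show "x \<in> E \<inter> ((\<lambda>v. p^i*v) ` ({v. p^i*v \<in> V \<and> \<not> p dvd v} \<inter> suppf \<psi>') \<times>
                   (\<lambda>w. p^j*w) ` ({w. p^j*w \<in> W \<and> \<not> p dvd w} \<inter> suppf \<theta>'))"
      using yz by blast
  qed
qed

lemma muE_pp:
  fixes p :: nat
  assumes "prime p" "\<psi> 0 = 0" "\<theta> 0 = 0" "V \<subseteq> {1..}" "W \<subseteq> {1..}" "E \<subseteq> V \<times> W"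
     "multiplicative f" "multiplicative g"
  shows "muE f g \<psi> \<theta> (E \<inter> ({v\<in>V. multiplicity p v = i} \<times> {w\<in>W. multiplicity p w = j}))
    = (f (p^i) / (real p^i * real p^ea)) * (g (p^j) / (real p^j * real p^eb)) *
      muE f g (\<lambda>v. if p dvd v then 0 else real p^ea * \<psi> (p^i*v))
              (\<lambda>w. if p dvd w then 0 else real p^eb * \<theta> (p^j*w))
              {(v,w). (p^i*v, p^j*w) \<in> E \<and> \<not> p dvd v \<and> \<not> p dvd w}"
proof -
  define \<psi>' where "\<psi>' = (\<lambda>v. if p dvd v then 0 else real p^ea * \<psi> (p^i*v))"
  define \<theta>' where "\<theta>' = (\<lambda>w. if p dvd w then 0 else real p^eb * \<theta> (p^j*w))"
  define A where "A = {(v,w). (p^i*v, p^j*w) \<in> E \<and> \<not> p dvd v \<and> \<not> p dvd w} \<inter> (suppf \<psi>' \<times> suppf \<theta>')"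
  define c where "c = (f (p^i) / (real p^i * real p^ea)) * (g (p^j) / (real p^j * real p^eb))"
  have pp: "p > 0" using assms(1) prime_gt_0_nat by simp
  have inj: "inj_on (\<lambda>(v,w). (p^i*v, p^j*w)) A" using pp by (auto simp: inj_on_def)
  have "muE f g \<psi> \<theta> (E \<inter> ({v\<in>V. multiplicity p v = i} \<times> {w\<in>W. multiplicity p w = j}))
     = sum (\<lambda>x. mu1 f \<psi> (fst x) * mu1 g \<theta> (snd x)) ((\<lambda>(v,w). (p^i*v, p^j*w)) ` A)"
    unfolding muE_def A_def \<psi>'_def \<theta>'_def
    by (rule arg_cong[where f="sum _"], rule setE_pp[where p=p and \<psi>=\<psi> and \<theta>=\<theta> and V=V and W=W and E=E and i=i and j=j and ea=ea and eb=eb, OF assms(1-6)])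
  also have "\<dots> = sum (\<lambda>x. mu1 f \<psi> (p^i * fst x) * mu1 g \<theta> (p^j * snd x)) A"
    using sum.reindex[OF inj, of "\<lambda>x. mu1 f \<psi> (fst x) * mu1 g \<theta> (snd x)"] by (simp add: comp_def case_prod_beta)
  also have "\<dots> = sum (\<lambda>x. c * (mu1 f \<psi>' (fst x) * mu1 g \<theta>' (snd x))) A"
  proof (rule sum.cong[OF refl])
    fix x assume "x \<in> A"
    then have "\<not> p dvd fst x" "\<not> p dvd snd x" by (auto simp: A_def)
    then have "mu1 f \<psi> (p^i * fst x) = f (p^i) / (real p^i * real p^ea) * mu1 f \<psi>' (fst x)"
         "mu1 g \<theta> (p^j * snd x) = g (p^j) / (real p^j * real p^eb) * mu1 g \<theta>' (snd x)"
      unfolding \<psi>'_def \<theta>'_def using mu1_pp[OF assms(1) _ assms(7)] mu1_pp[OF assms(1) _ assms(8)] by blast+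
    then show "mu1 f \<psi> (p^i * fst x) * mu1 g \<theta> (p^j * snd x) = c * (mu1 f \<psi>' (fst x) * mu1 g \<theta>' (snd x))"
      unfolding c_def by simp
  qed
  also have "\<dots> = c * muE f g \<psi>' \<theta>' {(v,w). (p^i*v, p^j*w) \<in> E \<and> \<not> p dvd v \<and> \<not> p dvd w}"
    by (simp add: muE_def A_def sum_distrib_left)
  finally show ?thesis unfolding c_def \<psi>'_def \<theta>'_def .
qed

lemma final_alg:
  fixes A P P' L X eK eD s b c1 c2 mE mE' mV mW mV' mW' mEij mVi mWj d0 :: real
  assumes A1: "A > 1" and c1: "0 \<le> c1" and c2: "0 \<le> c2" and cb: "c1 * c2 \<le> b"
    and s: "0 < s" "s < 1" and L: "0 \<le> L" and eK: "0 < eK" and eD: "0 < eD"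
    and mV: "0 < mV" and mW: "0 < mW" and mV': "0 \<le> mV'" and mW': "0 \<le> mW'"
    and cexI: "mE > A powr P * L * (mV * mW * eK) powr s"
    and ncex: "mE' \<le> A powr P' * L * (mV' * mW' * (eK * eD)) powr s"
    and PP: "P' \<le> P - d0"
    and hE: "mEij = c1 * c2 * mE'" and hV: "mVi = c1 * mV'" and hW: "mWj = c2 * mW'"
  shows "mEij / mE \<le> A powr (- d0) * b powr (1 - s) * (mVi / mV * (mWj / mW) * eD) powr s"
proof -
  have mEpos: "mE > 0"
    using cexI L A1 by (smt (verit) mult_nonneg_nonneg powr_ge_zero)
  have rhs0: "0 \<le> A powr (- d0) * b powr (1 - s) * (mVi / mV * (mWj / mW) * eD) powr s" by simp
  show ?thesis
  proof (cases "c1 * c2 = 0")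
    case True
    then have "mEij = 0" using hE by simp
    then show ?thesis using rhs0 by simp
  next
    case False
    define c where "c = c1 * c2"
    have cpos: "c > 0" using False c1 c2 by (simp add: c_def)
    define Y where "Y = mVi * mWj * (eK * eD)"
    have Y0: "0 \<le> Y" unfolding Y_def hV hW using c1 c2 mV' mW' eK eD by simp
    have "mV' * mW' * (eK * eD) = Y / c"
    proof -
      have "Y = c * (mV' * mW' * (eK * eD))" unfolding Y_def hV hW c_def by (simp add: algebra_simps)
      then show ?thesis using cpos by simp
    qed
    then have "mEij \<le> c * (A powr P' * L * (Y / c) powr s)"
      using ncex hE cpos unfolding c_def[symmetric] by (simp add: mult_left_mono)
    also have "c * (A powr P' * L * (Y / c) powr s) = c powr (1 - s) * A powr P' * L * Y powr s"
    proof -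
      have "(Y / c) powr s = Y powr s / c powr s" using Y0 cpos by (simp add: powr_divide)
      moreover have "c / c powr s = c powr (1 - s)" using cpos by (simp add: powr_diff)
      ultimately have "c * (Y / c) powr s = c powr (1 - s) * Y powr s"
        by (metis times_divide_eq_right times_divide_eq_left)
      then show ?thesis by (metis mult.assoc mult.commute mult.left_commute)
    qed
    also have "Y = (mVi / mV * (mWj / mW) * eD) * (mV * mW * eK)"
      unfolding Y_def using mV mW by (simp add: field_simps)
    also have "c powr (1 - s) * A powr P' * L * (\<dots>) powr s
        = c powr (1 - s) * (mVi / mV * (mWj / mW) * eD) powr s * A powr P' * (L * (mV * mW * eK) powr s)"
    proof -
      have "0 \<le> mVi / mV * (mWj / mW) * eD" unfolding hV hW using c1 c2 mV' mW' mV mW eD by simp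
      moreover have "0 \<le> mV * mW * eK" using mV mW eK by simp
      ultimately have "((mVi / mV * (mWj / mW) * eD) * (mV * mW * eK)) powr s
          = (mVi / mV * (mWj / mW) * eD) powr s * (mV * mW * eK) powr s" by (simp only: powr_mult)
      then show ?thesis by (simp only: ac_simps)
    qed
    also have "A powr P' \<le> A powr (- d0) * A powr P"
    proof -
      have "A powr P' \<le> A powr (P - d0)" using A1 PP by simp
      also have "\<dots> = A powr (- d0) * A powr P" by (simp add: powr_diff powr_minus field_simps)
      finally show ?thesis .
    qed
    then have "c powr (1 - s) * (mVi / mV * (mWj / mW) * eD) powr s * A powr P' * (L * (mV * mW * eK) powr s)
        \<le> c powr (1 - s) * (mVi / mV * (mWj / mW) * eD) powr s * (A powr (- d0) * A powr P) * (L * (mV * mW * eK) powr s)"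
      by (intro mult_right_mono mult_left_mono) (simp_all add: L)
    also have "\<dots> = A powr (- d0) * c powr (1 - s) * (mVi / mV * (mWj / mW) * eD) powr s * (A powr P * L * (mV * mW * eK) powr s)"
      by (simp add: field_simps)
    also have "\<dots> \<le> A powr (- d0) * b powr (1 - s) * (mVi / mV * (mWj / mW) * eD) powr s * mE"
    proof (intro mult_mono)
      show "c powr (1 - s) \<le> b powr (1 - s)" using cpos cb s unfolding c_def by (intro powr_mono2) auto
      show "A powr P * L * (mV * mW * eK) powr s \<le> mE" using cexI by simp
    qed (auto simp: L)
    finally show ?thesis using mEpos by (simp add: divide_le_eq mult.commute mult.left_commute)
  qed
qed

lemma mu1_nonneg: "(\<forall>n. 0 \<le> f n) \<Longrightarrow> (\<forall>n. 0 \<le> \<psi> n) \<Longrightarrow> 0 \<le> mu1 f \<psi> v"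
  unfolding mu1_def by simp

lemma muS_nonneg: "(\<forall>n. 0 \<le> f n) \<Longrightarrow> (\<forall>n. 0 \<le> \<psi> n) \<Longrightarrow> 0 \<le> muS f \<psi> V"
  unfolding muS_def by (intro sum_nonneg mu1_nonneg) auto

lemma muE_le:
  assumes "\<forall>n. 0 \<le> f n" "\<forall>n. 0 \<le> g n" "\<forall>n. 0 \<le> \<psi> n" "\<forall>n. 0 \<le> \<theta> n"
    "finite (suppf \<psi>)" "finite (suppf \<theta>)" "E \<subseteq> V \<times> W"
  shows "muE f g \<psi> \<theta> E \<le> muS f \<psi> V * muS g \<theta> W"
proof -
  have "muS f \<psi> V * muS g \<theta> W = (\<Sum>x \<in> (V \<inter> suppf \<psi>) \<times> (W \<inter> suppf \<theta>). mu1 f \<psi> (fst x) * mu1 g \<theta> (snd x))"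
    unfolding muS_def sum_product sum.cartesian_product by (simp add: case_prod_beta)
  moreover have "muE f g \<psi> \<theta> E \<le> (\<Sum>x \<in> (V \<inter> suppf \<psi>) \<times> (W \<inter> suppf \<theta>). mu1 f \<psi> (fst x) * mu1 g \<theta> (snd x))"
    unfolding muE_def
    by (rule sum_mono2) (use assms in \<open>auto intro!: mult_nonneg_nonneg mu1_nonneg\<close>)
  ultimately show ?thesis by simp
qed

lemma f_pow_le:
  fixes p :: nat
  assumes "\<forall>n. 0 \<le> f n" "\<forall>n\<ge>1. (\<Sum>d | d dvd n. f d) \<le> real n" "p > 0"
  shows "f (p^k) \<le> real p ^ k"
proof -
  have pk: "p^k \<ge> 1" using assms(3) by simp
  have "f (p^k) \<le> (\<Sum>d | d dvd p^k. f d)"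
    by (rule member_le_sum) (use assms pk in auto)
  also have "\<dots> \<le> real (p^k)" using assms(2) pk by blast
  finally show ?thesis by simp
qed

theorem lemma3p1:
  fixes p0 :: "real \<Rightarrow> real \<Rightarrow> real"
    and \<psi> \<theta> f g :: "nat \<Rightarrow> real"
    and \<epsilon> C t K :: real
    and V W :: "nat set"
    and E :: "(nat \<times> nat) set"
    and p :: nat
  assumes p0_pos: "\<forall>e c. 0 < e \<and> e \<le> 2/5 \<and> 0 < c \<longrightarrow> 0 < p0 e c"
    and cex: "counterexample p0 \<psi> \<theta> \<epsilon> C t K f g V W E"
    and minimal: "\<forall>\<psi>' \<theta>' \<epsilon>' C' t' K' f' g' V' W' E'.
        counterexample p0 \<psi>' \<theta>' \<epsilon>' C' t' K' f' g' V' W' E' \<longrightarrow>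
        card (Pset \<psi> \<theta>) \<le> card (Pset \<psi>' \<theta>')"
    and p: "p \<in> Pset \<psi> \<theta>"
  shows "\<forall>i j :: nat.
    muE f g \<psi> \<theta> (E \<inter> ({v \<in> V. multiplicity p v = i} \<times> {w \<in> W. multiplicity p w = j}))
      / muE f g \<psi> \<theta> E
    \<le> (100 * exp C) powr (- (if real p \<le> p0 \<epsilon> C then 1 else 0))
       * real p powr (- real_of_int \<bar>int i - int j\<bar> / (2 / (1 - 2 * \<epsilon>)))
       * ((muS f \<psi> {v \<in> V. multiplicity p v = i} / muS f \<psi> V)
          * (muS g \<theta> {w \<in> W. multiplicity p w = j} / muS g \<theta> W)
          * exp ((if i \<noteq> j then 1 else 0) * C)) powr (1 / (2 / (1 + 2 * \<epsilon>)))"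
proof -
  have eps: "0 < \<epsilon>" "\<epsilon> \<le> 2/5" and Cp: "0 < C"
    and psnn: "\<forall>n. 0 \<le> \<psi> n" and thnn: "\<forall>n. 0 \<le> \<theta> n" and ps0: "\<psi> 0 = 0" and th0: "\<theta> 0 = 0"
    and finps: "finite (suppf \<psi>)" and finth: "finite (suppf \<theta>)"
    and fnn: "\<forall>n. 0 \<le> f n" and gnn: "\<forall>n. 0 \<le> g n" and fm: "multiplicative f" and gm: "multiplicative g"
    and fs: "\<forall>n\<ge>1. (\<Sum>d | d dvd n. f d) \<le> real n" and gs: "\<forall>n\<ge>1. (\<Sum>d | d dvd n. g d) \<le> real n"
    and V1: "V \<subseteq> {1..}" and W1: "W \<subseteq> {1..}" and t1: "1 \<le> t"
    and Esub: "E \<subseteq> Eset \<psi> \<theta> t K \<inter> (V \<times> W)"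
    and ineq: "muE f g \<psi> \<theta> E >
       (100 * exp C) powr (Pbig p0 \<psi> \<theta> \<epsilon> C) * (LogT t) powr ((1/2) * (exp (40 * C) - 1))
       * (muS f \<psi> V * muS g \<theta> W * exp (- C * K)) powr (1/2 + \<epsilon>)"
    using cex unfolding counterexample_def by blast+
  have pr: "prime p" using p by (simp add: Pset_def)
  have ppos: "0 < p" using pr prime_gt_0_nat by blast
  have p1: "1 < real p" using pr prime_gt_1_nat by simp
  have EVW: "E \<subseteq> V \<times> W" using Esub by blast
  have finP: "finite (Pset \<psi> \<theta>)"
  proof -
    define M where "M = Max (suppf \<psi>) * Max (suppf \<theta>)"
    have "Pset \<psi> \<theta> \<subseteq> {..M}"
    proof
      fix q assume "q \<in> Pset \<psi> \<theta>"
      then obtain v w where q: "prime q" "v \<in> suppf \<psi>" "w \<in> suppf \<theta>" "q dvd v*w"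
        by (auto simp: Pset_def)
      have "v \<noteq> 0" using q(2) ps0 unfolding suppf_def by (metis mem_Collect_eq)
      moreover have "w \<noteq> 0" using q(3) th0 unfolding suppf_def by (metis mem_Collect_eq)
      ultimately have "q \<le> v*w" using q(4) by (simp add: dvd_imp_le)
      also have "v*w \<le> M" unfolding M_def
        using Max_ge[OF finps q(2)] Max_ge[OF finth q(3)] by (simp add: mult_le_mono)
      finally show "q \<in> {..M}" by simp
    qed
    then show ?thesis using finite_subset by blast
  qed
  define A where "A = 100 * exp C"
  define L where "L = (LogT t) powr ((1/2) * (exp (40 * C) - 1))"
  define s where "s = 1/2 + \<epsilon>"
  have A1: "A > 1"
  proof -
    have "exp C \<ge> 1" using Cp by simp
    then show ?thesis unfolding A_def by linarith
  qed
  have L0: "0 \<le> L" unfolding L_def by simp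
  have mEpos: "muE f g \<psi> \<theta> E > 0"
    using ineq L0 A1 unfolding A_def[symmetric] L_def[symmetric]
    by (smt (verit) mult_nonneg_nonneg powr_ge_zero)
  have mVW: "muE f g \<psi> \<theta> E \<le> muS f \<psi> V * muS g \<theta> W"
    by (rule muE_le[OF fnn gnn psnn thnn finps finth EVW])
  have mV: "0 < muS f \<psi> V" and mW: "0 < muS g \<theta> W"
  proof -
    have a: "0 \<le> muS f \<psi> V" "0 \<le> muS g \<theta> W" using muS_nonneg fnn gnn psnn thnn by auto
    have "0 < muS f \<psi> V * muS g \<theta> W" using mVW mEpos by linarith
    then show "0 < muS f \<psi> V" "0 < muS g \<theta> W" using a
      by (metis less_eq_real_def mult_zero_left mult_zero_right)+
  qed
  show ?thesis (is "\<forall>i j. ?G i j")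
  proof (intro allI)
    fix i j :: nat
    define ea where "ea = j - min i j"
    define eb where "eb = i - min i j"
    define \<psi>' where "\<psi>' = (\<lambda>v. if p dvd v then 0 else real p^ea * \<psi> (p^i*v))"
    define \<theta>' where "\<theta>' = (\<lambda>w. if p dvd w then 0 else real p^eb * \<theta> (p^j*w))"
    define V' where "V' = {v. p^i*v \<in> V \<and> \<not> p dvd v}"
    define W' where "W' = {w. p^j*w \<in> W \<and> \<not> p dvd w}"
    define E' where "E' = {(v,w). (p^i*v, p^j*w) \<in> E \<and> \<not> p dvd v \<and> \<not> p dvd w}"
    define \<delta> :: real where "\<delta> = (if i \<noteq> j then 1 else 0)"
    define K' where "K' = K - \<delta>"
    have inj_i: "inj (\<lambda>v. p^i*v)" and inj_j: "inj (\<lambda>v. p^j*v)" using ppos by (auto simp: inj_on_def)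
    have finps': "finite (suppf \<psi>')"
    proof -
      have "suppf \<psi>' \<subseteq> (\<lambda>v. p^i*v) -` suppf \<psi>" by (auto simp: suppf_def \<psi>'_def split: if_splits)
      then show ?thesis using finite_vimageI[OF finps inj_i] finite_subset by blast
    qed
    have finth': "finite (suppf \<theta>')"
    proof -
      have "suppf \<theta>' \<subseteq> (\<lambda>v. p^j*v) -` suppf \<theta>" by (auto simp: suppf_def \<theta>'_def split: if_splits)
      then show ?thesis using finite_vimageI[OF finth inj_j] finite_subset by blast
    qed
    have Psub: "Pset \<psi>' \<theta>' \<subseteq> Pset \<psi> \<theta> - {p}"
    proof
      fix q assume "q \<in> Pset \<psi>' \<theta>'"
      then obtain v w where q: "prime q" "v \<in> suppf \<psi>'" "w \<in> suppf \<theta>'" "q dvd v*w"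
        by (auto simp: Pset_def)
      have v: "\<not> p dvd v" "\<psi> (p^i*v) \<noteq> 0" using q(2) by (auto simp: suppf_def \<psi>'_def split: if_splits)
      have w: "\<not> p dvd w" "\<theta> (p^j*w) \<noteq> 0" using q(3) by (auto simp: suppf_def \<theta>'_def split: if_splits)
      have "(p^i*v)*(p^j*w) = (p^i*p^j)*(v*w)" by (simp add: ac_simps)
      then have dv: "q dvd (p^i*v)*(p^j*w)" using q(4) by (metis dvd_mult)
      have "q \<noteq> p"
      proof
        assume "q = p"
        then have "p dvd v \<or> p dvd w" using q(4) pr prime_dvd_mult_iff by blast
        then show False using v w by blast
      qed
      then show "q \<in> Pset \<psi> \<theta> - {p}" using q(1) v w dv by (auto simp: Pset_def suppf_def)
    qed
    have card_lt: "card (Pset \<psi>' \<theta>') < card (Pset \<psi> \<theta>)"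
      using Psub p finP by (intro psubset_card_mono) auto
    have ncex: "\<not> counterexample p0 \<psi>' \<theta>' \<epsilon> C t K' f g V' W' E'"
      using minimal card_lt by (meson not_le)
    have Esub': "E' \<subseteq> Eset \<psi>' \<theta>' t K' \<inter> (V' \<times> W')"
    proof
      fix x assume "x \<in> E'"
      then obtain v w where x: "x = (v,w)" "(p^i*v, p^j*w) \<in> E" "\<not> p dvd v" "\<not> p dvd w"
        by (auto simp: E'_def)
      then have mem: "(p^i*v, p^j*w) \<in> Eset \<psi> \<theta> t K" "p^i*v \<in> V" "p^j*w \<in> W" using Esub by auto
      then have e: "\<psi> (p^i*v) \<noteq> 0" "\<theta> (p^j*w) \<noteq> 0" "Dpt \<psi> \<theta> (p^i*v) (p^j*w) \<le> 1"
          "real (omega_t t (p^i*v) (p^j*w)) \<ge> K"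
        by (auto simp: Eset_def suppf_def)
      have D: "Dpt \<psi>' \<theta>' v w \<le> 1"
        using Dpt_pp[OF pr x(3,4), of j i \<psi> \<theta>] e(3) unfolding \<psi>'_def \<theta>'_def ea_def eb_def by simp
      have O: "real (omega_t t v w) \<ge> K'"
        using omega_pp[OF pr x(3,4), of t i j] e(4) unfolding K'_def \<delta>_def by (auto split: if_splits)
      show "x \<in> Eset \<psi>' \<theta>' t K' \<inter> (V' \<times> W')"
        using x mem e ppos D O by (auto simp: Eset_def suppf_def \<psi>'_def \<theta>'_def V'_def W'_def)
    qed
    have conds: "0 < \<epsilon> \<and> \<epsilon> \<le> 2/5 \<and> 0 < C \<and>
     (\<forall>n. 0 \<le> \<psi>' n) \<and> (\<forall>n. 0 \<le> \<theta>' n) \<and> \<psi>' 0 = 0 \<and> \<theta>' 0 = 0 \<and>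
     finite (suppf \<psi>') \<and> finite (suppf \<theta>') \<and>
     (\<forall>n. 0 \<le> f n) \<and> (\<forall>n. 0 \<le> g n) \<and> multiplicative f \<and> multiplicative g \<and>
     (\<forall>n\<ge>1. (\<Sum>d | d dvd n. f d) \<le> real n) \<and> (\<forall>n\<ge>1. (\<Sum>d | d dvd n. g d) \<le> real n) \<and>
     V' \<subseteq> {1..} \<and> W' \<subseteq> {1..} \<and> 1 \<le> t \<and>
     E' \<subseteq> Eset \<psi>' \<theta>' t K' \<inter> (V' \<times> W')"
    proof (intro conjI)
      show "\<forall>n. 0 \<le> \<psi>' n" using psnn by (simp add: \<psi>'_def)
      show "\<forall>n. 0 \<le> \<theta>' n" using thnn by (simp add: \<theta>'_def)
      show "V' \<subseteq> {1..}" by (auto simp: V'_def Suc_le_eq intro!: Nat.gr0I)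
      show "W' \<subseteq> {1..}" by (auto simp: W'_def Suc_le_eq intro!: Nat.gr0I)
    qed (use eps Cp fnn gnn fm gm fs gs t1 Esub' finps' finth' in \<open>auto simp: \<psi>'_def \<theta>'_def\<close>)
    have ineq': "muE f g \<psi>' \<theta>' E' \<le> A powr (Pbig p0 \<psi>' \<theta>' \<epsilon> C) * L
       * (muS f \<psi>' V' * muS g \<theta>' W' * exp (- C * K')) powr s"
    proof -
      have "\<not> (muE f g \<psi>' \<theta>' E' >
       (100 * exp C) powr (Pbig p0 \<psi>' \<theta>' \<epsilon> C) * (LogT t) powr ((1/2) * (exp (40 * C) - 1))
       * (muS f \<psi>' V' * muS g \<theta>' W' * exp (- C * K')) powr (1/2 + \<epsilon>))"
        using ncex conds unfolding counterexample_def by blast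
      then show ?thesis unfolding A_def L_def s_def by linarith
    qed
    define c1 where "c1 = f (p^i) / (real p^i * real p^ea)"
    define c2 where "c2 = g (p^j) / (real p^j * real p^eb)"
    define Vi where "Vi = {v \<in> V. multiplicity p v = i}"
    define Wj where "Wj = {w \<in> W. multiplicity p w = j}"
    have hE: "muE f g \<psi> \<theta> (E \<inter> (Vi \<times> Wj)) = c1 * c2 * muE f g \<psi>' \<theta>' E'"
      unfolding \<psi>'_def \<theta>'_def E'_def c1_def c2_def Vi_def Wj_def
      by (rule muE_pp[where p=p and \<psi>=\<psi> and \<theta>=\<theta> and V=V and W=W and E=E and f=f and g=g and i=i and j=j and ea=ea and eb=eb, OF pr ps0 th0 V1 W1 EVW fm gm])
    have hV: "muS f \<psi> Vi = c1 * muS f \<psi>' V'"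
      unfolding \<psi>'_def V'_def c1_def Vi_def by (rule muS_pp[where p=p and \<psi>=\<psi> and V=V and f=f and k=i and e=ea, OF pr ps0 V1 fm])
    have hW: "muS g \<theta> Wj = c2 * muS g \<theta>' W'"
      unfolding \<theta>'_def W'_def c2_def Wj_def by (rule muS_pp[where p=p and \<psi>=\<theta> and V=W and f=g and k=j and e=eb, OF pr th0 W1 gm])
    have c1: "0 \<le> c1" unfolding c1_def using fnn by simp
    have c2: "0 \<le> c2" unfolding c2_def using gnn by simp
    define b where "b = real p powr (- real_of_int \<bar>int i - int j\<bar>)"
    have eab: "real (ea + eb) = real_of_int \<bar>int i - int j\<bar>"
      by (cases "i \<le> j") (auto simp: ea_def eb_def min_def)
    have cb: "c1 * c2 \<le> b"
    proof -
      have pe: "real p ^ k > 0" for k using ppos by simp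
      have "c1 \<le> real p^i / (real p^i * real p^ea)" unfolding c1_def
        using f_pow_le[OF fnn fs ppos, of i] pe by (intro divide_right_mono) auto
      also have "\<dots> = 1 / real p^ea" using pe[of i] by simp
      finally have a: "c1 \<le> 1 / real p^ea" .
      have "c2 \<le> real p^j / (real p^j * real p^eb)" unfolding c2_def
        using f_pow_le[OF gnn gs ppos, of j] pe by (intro divide_right_mono) auto
      also have "\<dots> = 1 / real p^eb" using pe[of j] by simp
      finally have bb: "c2 \<le> 1 / real p^eb" .
      have "c1 * c2 \<le> (1 / real p^ea) * (1 / real p^eb)"
        using a bb c1 c2 by (intro mult_mono) auto
      also have "\<dots> = 1 / real p ^ (ea + eb)" by (simp add: power_add)
      also have "\<dots> = b"
      proof -
        have "real p powr (- real (ea + eb)) = inverse (real p powr real (ea + eb))" by (rule powr_minus)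
        also have "real p powr real (ea + eb) = real p ^ (ea + eb)" by (rule powr_realpow) (use ppos in simp)
        finally show ?thesis unfolding b_def eab[symmetric] by (simp add: divide_inverse)
      qed
      finally show ?thesis .
    qed
    define d0 :: real where "d0 = (if real p \<le> p0 \<epsilon> C then 1 else 0)"
    have PP: "Pbig p0 \<psi>' \<theta>' \<epsilon> C \<le> Pbig p0 \<psi> \<theta> \<epsilon> C - d0"
    proof -
      define I where "I = {q::nat. 1 \<le> real q \<and> real q \<le> p0 \<epsilon> C}"
      have finPI: "finite (Pset \<psi> \<theta> \<inter> I)" using finP by simp
      have sub: "Pset \<psi>' \<theta>' \<inter> I \<subseteq> (Pset \<psi> \<theta> \<inter> I) - {p}" using Psub by blast
      have cle: "card (Pset \<psi>' \<theta>' \<inter> I) \<le> card ((Pset \<psi> \<theta> \<inter> I) - {p})"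
        using sub finPI by (intro card_mono) auto
      have "real (card (Pset \<psi>' \<theta>' \<inter> I)) \<le> real (card (Pset \<psi> \<theta> \<inter> I)) - d0"
      proof (cases "real p \<le> p0 \<epsilon> C")
        case True
        then have pI: "p \<in> Pset \<psi> \<theta> \<inter> I" using p p1 by (simp add: I_def)
        then have "card ((Pset \<psi> \<theta> \<inter> I) - {p}) = card (Pset \<psi> \<theta> \<inter> I) - 1"
          using finPI by simp
        moreover have "card (Pset \<psi> \<theta> \<inter> I) \<ge> 1" using pI finPI
          by (metis One_nat_def Suc_leI card_gt_0_iff empty_iff)
        ultimately show ?thesis using cle True by (simp add: d0_def of_nat_diff)
      next
        case False
        have "card ((Pset \<psi> \<theta> \<inter> I) - {p}) \<le> card (Pset \<psi> \<theta> \<inter> I)"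
          using finPI by (intro card_mono) auto
        then show ?thesis using cle False by (simp add: d0_def)
      qed
      then show ?thesis unfolding Pbig_def I_def by simp
    qed
    have s01: "0 < s" "s < 1" using eps unfolding s_def by auto
    have eK: "0 < exp (- C * K)" and eD: "0 < exp (\<delta> * C)" by simp_all
    have expK': "exp (- C * K') = exp (- C * K) * exp (\<delta> * C)"
      unfolding K'_def by (simp add: exp_add[symmetric] algebra_simps)
    have fin: "muE f g \<psi> \<theta> (E \<inter> (Vi \<times> Wj)) / muE f g \<psi> \<theta> E
        \<le> A powr (- d0) * b powr (1 - s) * (muS f \<psi> Vi / muS f \<psi> V * (muS g \<theta> Wj / muS g \<theta> W) * exp (\<delta> * C)) powr s"
    proof (rule final_alg[OF A1 c1 c2 cb s01 L0 eK eD mV mW muS_nonneg[OF fnn] muS_nonneg[OF gnn]])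
      show "\<forall>n. 0 \<le> \<psi>' n" using psnn by (simp add: \<psi>'_def)
      show "\<forall>n. 0 \<le> \<theta>' n" using thnn by (simp add: \<theta>'_def)
      show "muE f g \<psi> \<theta> E > A powr (Pbig p0 \<psi> \<theta> \<epsilon> C) * L * (muS f \<psi> V * muS g \<theta> W * exp (- C * K)) powr s"
        using ineq unfolding A_def L_def s_def .
      show "muE f g \<psi>' \<theta>' E' \<le> A powr (Pbig p0 \<psi>' \<theta>' \<epsilon> C) * L * (muS f \<psi>' V' * muS g \<theta>' W' * (exp (- C * K) * exp (\<delta> * C))) powr s"
        using ineq' unfolding expK' .
    qed (rule PP, rule hE, rule hV, rule hW)
    have e1: "real p powr (- real_of_int \<bar>int i - int j\<bar> / (2 / (1 - 2 * \<epsilon>))) = b powr (1 - s)"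
    proof -
      have h: "- real_of_int \<bar>int i - int j\<bar> / (2 / (1 - 2 * \<epsilon>)) = (- real_of_int \<bar>int i - int j\<bar>) * (1 - s)"
        unfolding s_def using eps by (simp add: field_simps)
      have h2: "b powr (1 - s) = real p powr ((- real_of_int \<bar>int i - int j\<bar>) * (1 - s))"
        unfolding b_def by (rule powr_powr)
      show ?thesis unfolding h h2 by (rule refl)
    qed
    have e2: "1 / (2 / (1 + 2 * \<epsilon>)) = s" unfolding s_def by simp
    have e3: "exp ((if i \<noteq> j then 1 else 0) * C) = exp (\<delta> * C)" unfolding \<delta>_def by simp
    have e4: "(100 * exp C) powr (- (if real p \<le> p0 \<epsilon> C then 1 else 0)) = A powr (- d0)"
      unfolding A_def d0_def by simp
    show "?G i j" unfolding e1 e2 e3 e4 using fin unfolding Vi_def Wj_def .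
  qed
qed

end
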